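(* Let $d\geq1$ and let $\mathbb P$ be a shift-invariant probability measure on $\Omega$ with forbidden direction $-\hat u$, $\hat u\in\mathbb R^d\setminus\{0\}$, i.e. $\mathbb P\big(\sum_{z:\,z\cdot\hat u\geq0}\pi_{0z}=1\big)=1$. Assume (N): there is a deterministic $\delta>0$ with $\mathbb P\big(\sum_z z\cdot\hat u\,\pi_{0z}\geq\delta\big)=1$; and (M) with some $p>1$: there is a deterministic $M>0$ with $\mathbb P\big(\sum_z|z|^p\pi_{0z}\leq M^p\big)=1$. Then there exist strictly positive finite constants $\bar C_m(M,\delta,p)$ (for $m\geq0$), $\hat C_{\bar p}(M,\delta,p)$ (for $1\leq\bar p<p$) and $\lambda_0(M,\delta,p)$ such that for all $x\in\mathbb Z^d$, $\lambda\in[0,\lambda_0]$, integers $n,m\geq0$ and $\mathbb P$-a.e. $\omega$: (i) $E^\omega_x(|X_m-x|^{\bar p})\leq M^{\bar p}m^{\bar p}$ for $1\leq\bar p\leq p$; (ii) $E^\omega_x(e^{-\lambda X_n\cdot\hat u})\leq e^{-\lambda x\cdot\hat u}(1-\lambda\delta/2)^n$; (iii) $P^\omega_x(\sigma_1>n)\leq e^{\lambda}(1-\lambda\delta/2)^n$; (iv) $E^\omega_x(\sigma_1^m)\leq\bar C_m$; (v) $E^\omega_x(|X_{\sigma_1}-x|^{\bar p})\leq\hat C_{\bar p}$ for $1\leq\bar p<p$.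
   Context: $\Omega=\mathcal P^{\mathbb Z^d}$, $\mathcal P$ the probability vectors on $\mathbb Z^d$; $\omega_x=(\pi_{x,x+y}(\omega))_y$; shifts $\pi_{xy}(T_z\omega)=\pi_{x+z,y+z}(\omega)$, and shift-invariance means $\mathbb P\circ T_z^{-1}=\mathbb P$ for all $z$. $P^\omega_x$ is the law of the Markov chain $(X_n)$ with $X_0=x$ and transitions $\pi_{yz}(\omega)$, $E^\omega_x$ its expectation. $|\cdot|$ is the $\ell^1$ norm. $\sigma_1=\inf\{n: X_n\cdot\hat u\geq X_0\cdot\hat u+1\}$. *)

theory Defs
  imports "HOL-Analysis.Analysis" "HOL-Probability.Probability"
begin

text \<open>Sites are points of Z^d, rendered as int^'d (the dimension d = CARD('d) \<ge> 1).
  An environment omega is rendered by its transition probabilities: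
  omega x y = pi_{xy}(omega).\<close>

type_synonym 'd env = "int^'d \<Rightarrow> int^'d \<Rightarrow> real"

definition l1norm :: "int^('d::finite) \<Rightarrow> real" where
  "l1norm z = (\<Sum>i\<in>UNIV. real_of_int \<bar>z$i\<bar>)"

definition dotu :: "int^('d::finite) \<Rightarrow> real^'d \<Rightarrow> real" where
  "dotu z u = (\<Sum>i\<in>UNIV. real_of_int (z$i) * u$i)"

definition prob_vectors :: "(int^('d::finite) \<Rightarrow> real) set" where
  "prob_vectors = {q. (\<forall>y. 0 \<le> q y) \<and> (q has_sum 1) UNIV}"

definition Omega :: "('d::finite) env set" where
  "Omega = {\<omega>. \<forall>x. (\<lambda>y. \<omega> x (x + y)) \<in> prob_vectors}"

definition shift :: "int^('d::finite) \<Rightarrow> 'd env \<Rightarrow> 'd env" where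
  "shift z \<omega> = (\<lambda>x y. \<omega> (x + z) (y + z))"

definition env_space :: "('d::finite) env measure" where
  "env_space = PiM UNIV (\<lambda>_. PiM UNIV (\<lambda>_. borel))"

definition kernel :: "('d::finite) env \<Rightarrow> int^'d \<Rightarrow> (int^'d) pmf" where
  "kernel \<omega> x = embed_pmf (\<omega> x)"

text \<open>Law under P^omega_x of the path (X_0,...,X_n), as a list of length n+1
  (entry k is X_k).\<close>
fun path_pmf :: "('d::finite) env \<Rightarrow> int^'d \<Rightarrow> nat \<Rightarrow> (int^'d) list pmf" where
  "path_pmf \<omega> x 0 = return_pmf [x]"
| "path_pmf \<omega> x (Suc n) =
     bind_pmf (path_pmf \<omega> x n) (\<lambda>ys. map_pmf (\<lambda>y. ys @ [y]) (kernel \<omega> (last ys)))"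

definition hits :: "real^('d::finite) \<Rightarrow> (int^'d) list \<Rightarrow> nat \<Rightarrow> bool" where
  "hits u ys k \<longleftrightarrow> k < length ys \<and> dotu (ys!0) u + 1 \<le> dotu (ys!k) u"

text \<open>For a path (X_0..X_N): min(sigma_1, N)\<close>
definition sigma_trunc :: "real^('d::finite) \<Rightarrow> (int^'d) list \<Rightarrow> nat" where
  "sigma_trunc u ys = (if \<exists>k. hits u ys k then (LEAST k. hits u ys k) else length ys - 1)"

text \<open>E^omega_x (sigma_1^m) = sup_N E^omega_x (min(sigma_1,N)^m) (monotone convergence)\<close>
definition E_sigma_pow :: "('d::finite) env \<Rightarrow> real^'d \<Rightarrow> int^'d \<Rightarrow> nat \<Rightarrow> ennreal" where
  "E_sigma_pow \<omega> u x m =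
     (SUP N. \<integral>\<^sup>+ ys. ennreal (real (sigma_trunc u ys) ^ m) \<partial>measure_pmf (path_pmf \<omega> x N))"

text \<open>E^omega_x (|X_{sigma_1} - x|^pb ; sigma_1 < infinity)
   = sup_N E^omega_x (|X_{sigma_1} - x|^pb ; sigma_1 \<le> N)\<close>
definition E_hit_disp :: "('d::finite) env \<Rightarrow> real^'d \<Rightarrow> int^'d \<Rightarrow> real \<Rightarrow> ennreal" where
  "E_hit_disp \<omega> u x pb =
     (SUP N. \<integral>\<^sup>+ ys. (if \<exists>k. hits u ys k
                        then ennreal (l1norm (ys ! sigma_trunc u ys - x) powr pb) else 0)
             \<partial>measure_pmf (path_pmf \<omega> x N))"

end

theory Submission
  imports Defs
begin

lemma path_support:
  "ys \<in> set_pmf (path_pmf \<omega> x n) \<Longrightarrow> length ys = Suc n \<and> ys ! 0 = x"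
proof (induction n arbitrary: ys)
  case 0 then show ?case by simp
next
  case (Suc n)
  then obtain zs y where "zs \<in> set_pmf (path_pmf \<omega> x n)" "ys = zs @ [y]" by auto
  with Suc.IH[of zs] show ?case by (auto simp: nth_append)
qed

lemma path_prefix:
  "k \<le> N \<Longrightarrow> map_pmf (take (Suc k)) (path_pmf \<omega> x N) = path_pmf \<omega> x k"
proof (induction N)
  case 0 then show ?case by simp
next
  case (Suc N)
  show ?case
  proof (cases "k = Suc N")
    case True
    have "map_pmf (take (Suc k)) (path_pmf \<omega> x (Suc N)) = map_pmf id (path_pmf \<omega> x (Suc N))"
      by (rule map_pmf_cong) (auto simp: True dest!: path_support)
    then show ?thesis by (simp add: True pmf.map_id)
  next
    case False
    then have kN: "k \<le> N" using Suc by simp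
    have "map_pmf (take (Suc k)) (path_pmf \<omega> x (Suc N)) =
       bind_pmf (path_pmf \<omega> x N) (\<lambda>ys. map_pmf (\<lambda>y. take (Suc k) (ys @ [y])) (kernel \<omega> (last ys)))"
      by (simp add: map_bind_pmf pmf.map_comp o_def)
    also have "\<dots> = bind_pmf (path_pmf \<omega> x N) (\<lambda>ys. return_pmf (take (Suc k) ys))"
    proof (rule bind_pmf_cong[OF refl])
      fix ys assume "ys \<in> set_pmf (path_pmf \<omega> x N)"
      then have "length ys = Suc N" by (simp add: path_support)
      then have "\<And>y. take (Suc k) (ys @ [y]) = take (Suc k) ys" using kN by simp
      then show "map_pmf (\<lambda>y. take (Suc k) (ys @ [y])) (kernel \<omega> (last ys)) = return_pmf (take (Suc k) ys)"
        by (simp add: map_pmf_const)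
    qed
    also have "\<dots> = map_pmf (take (Suc k)) (path_pmf \<omega> x N)" by (simp add: map_pmf_def)
    finally show ?thesis using Suc.IH kN by simp
  qed
qed

lemma path_last_integral:
  "(\<integral>\<^sup>+ ys. f (ys ! Suc n) \<partial>measure_pmf (path_pmf \<omega> x (Suc n))) =
   (\<integral>\<^sup>+ ys. (\<integral>\<^sup>+ y. f y \<partial>measure_pmf (kernel \<omega> (ys ! n))) \<partial>measure_pmf (path_pmf \<omega> x n))"
proof -
  have "(\<integral>\<^sup>+ ys. f (ys ! Suc n) \<partial>measure_pmf (path_pmf \<omega> x (Suc n))) =
    (\<integral>\<^sup>+ ys. (\<integral>\<^sup>+ y. f ((ys @ [y]) ! Suc n) \<partial>measure_pmf (kernel \<omega> (last ys))) \<partial>measure_pmf (path_pmf \<omega> x n))"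
    by simp
  also have "\<dots> = (\<integral>\<^sup>+ ys. (\<integral>\<^sup>+ y. f y \<partial>measure_pmf (kernel \<omega> (ys ! n))) \<partial>measure_pmf (path_pmf \<omega> x n))"
  proof (rule nn_integral_cong_AE, rule AE_pmfI)
    fix ys assume "ys \<in> set_pmf (path_pmf \<omega> x n)"
    then have l: "length ys = Suc n" by (simp add: path_support)
    then have "last ys = ys ! n" using last_conv_nth[of ys] by (metis Zero_not_Suc diff_Suc_1 list.size(3))
    with l show "(\<integral>\<^sup>+ y. f ((ys @ [y]) ! Suc n) \<partial>measure_pmf (kernel \<omega> (last ys))) =
      (\<integral>\<^sup>+ y. f y \<partial>measure_pmf (kernel \<omega> (ys ! n)))" by (simp add: nth_append)
  qed
  finally show ?thesis .
qed

lemma nn_integral_infsum_real: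
  fixes f :: "'a \<Rightarrow> real"
  assumes "\<And>x. x \<in> A \<Longrightarrow> 0 \<le> f x" "f summable_on A"
  shows "(\<integral>\<^sup>+ x. ennreal (f x) \<partial>count_space A) = ennreal (infsum f A)"
proof -
  have "Infinite_Sum.abs_summable_on f A"
    using assms summable_on_iff_abs_summable_on_real by blast
  then have a: "Infinite_Set_Sum.abs_summable_on f A" using abs_summable_equivalent by blast
  have "(\<integral>\<^sup>+ x. ennreal (f x) \<partial>count_space A) = ennreal (infsetsum f A)"
    using nn_integral_conv_infsetsum[OF a] assms(1) by simp
  also have "\<dots> = ennreal (infsum f A)" using infsetsum_infsum[OF a] by simp
  finally show ?thesis .
qed

lemma lyap_pt:
  fixes y c r :: real
  assumes "0 \<le> y" "0 < c" "0 < r" "r \<le> 1"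
  shows "y powr r \<le> r * c powr (r - 1) * y + (1 - r) * c powr r"
proof (cases "y = 0")
  case True then show ?thesis using assms by simp
next
  case False
  then have "y powr r * c powr (1 - r) \<le> r * y + (1 - r) * c"
    using Youngs_inequality_0[of r "1-r" y c] assms by simp
  moreover have e1: "c powr (1 - r) * c powr (r - 1) = 1"
    using assms by (simp add: powr_add[symmetric])
  moreover have e2: "c * c powr (r - 1) = c powr r"
    using assms powr_add[of c "r - 1" 1] by (simp add: mult.commute)
  ultimately have "y powr r * (c powr (1 - r) * c powr (r - 1)) \<le> (r * y + (1 - r) * c) * c powr (r - 1)"
    by (metis mult.assoc mult_right_mono powr_ge_zero)
  then have "y powr r \<le> (r * y + (1 - r) * c) * c powr (r - 1)" using e1 by simp
  also have "\<dots> = r * c powr (r - 1) * y + (1 - r) * (c * c powr (r - 1))" by (simp add: algebra_simps)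
  finally show ?thesis using e2 by simp
qed


lemma convex_split:
  fixes a b \<theta> pb :: real
  assumes "0 \<le> a" "0 \<le> b" "1 \<le> pb" "0 < \<theta>" "\<theta> < 1"
  shows "(a + b) powr pb \<le> \<theta> powr (1 - pb) * a powr pb + (1 - \<theta>) powr (1 - pb) * b powr pb"
proof -
  have g1: "1 \<le> t powr (1 - pb)" if "0 < t" "t \<le> 1" for t :: real
    using that assms(3) by (metis diff_le_0_iff_le powr_mono2' powr_one_eq_one)
  consider "a = 0" | "b = 0" | "0 < a" "0 < b" using assms by linarith
  then show ?thesis
  proof cases
    case 1
    have "b powr pb \<le> (1 - \<theta>) powr (1 - pb) * b powr pb"
      using g1[of "1-\<theta>"] assms by (simp add: mult_le_cancel_right1)
    then show ?thesis using 1 assms by simp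
  next
    case 2
    have "a powr pb \<le> \<theta> powr (1 - pb) * a powr pb"
      using g1[of "\<theta>"] assms by (simp add: mult_le_cancel_right1)
    then show ?thesis using 2 assms by simp
  next
    case 3
    have c: "convex_on {0<..} (\<lambda>x::real. x powr pb)" using powr_convex assms by simp
    have "(\<theta> * (a / \<theta>) + (1 - \<theta>) * (b / (1 - \<theta>))) powr pb
       \<le> \<theta> * (a / \<theta>) powr pb + (1 - \<theta>) * (b / (1 - \<theta>)) powr pb"
      using convex_onD[OF c, of "1-\<theta>" "a/\<theta>" "b/(1-\<theta>)"] 3 assms by simp
    moreover have "\<theta> * (a / \<theta>) + (1 - \<theta>) * (b / (1 - \<theta>)) = a + b" using assms by simp
    moreover have "t * (z / t) powr pb = t powr (1 - pb) * z powr pb" if "0 < t" "0 \<le> z" for t z :: real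
      using that by (simp add: powr_divide powr_diff divide_simps)
    ultimately show ?thesis using assms 3
      by (metis diff_gt_0_iff_gt less_eq_real_def)
  qed
qed

lemma exp_q_bound:
  fixes t q :: real
  assumes "0 \<le> t" "1 < q" "q \<le> 2"
  shows "exp (- t) \<le> 1 - t + t powr q"
proof (cases "t \<le> 1")
  case True
  have "1 + t \<le> exp t" by (rule exp_ge_add_one_self)
  then have "exp (- t) \<le> 1 / (1 + t)" using assms
    by (simp add: exp_minus divide_simps)
  also have "\<dots> \<le> 1 - t + t ^ 2"
  proof -
    have "1 \<le> (1 + t) * (1 - t + t^2)" using assms by (simp add: algebra_simps power2_eq_square power3_eq_cube)
    then show ?thesis using assms by (simp add: divide_simps mult.commute)
  qed
  also have "t ^ 2 \<le> t powr q"
  proof (cases "t = 0")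
    case False
    then have "t powr 2 \<le> t powr q" using True assms by (intro powr_mono') auto
    then show ?thesis using False assms by (simp add: powr_realpow)
  qed (use assms in simp)
  then have "1 - t + t ^ 2 \<le> 1 - t + t powr q" by simp
  finally show ?thesis .
next
  case False
  have "exp (- t) \<le> 1" using assms by simp
  moreover have "t \<le> t powr q" using False assms
    by (metis less_eq_real_def not_le powr_mono powr_one_gt_zero_iff zero_less_one)
  ultimately show ?thesis by linarith
qed

lemma pow_fact_le_exp:
  fixes x :: real
  assumes "0 \<le> x"
  shows "x ^ m / fact m \<le> exp x"
proof -
  have "(\<Sum>n\<in>{m}. x ^ n / fact n) \<le> exp x"
    using assms summable_exp_generic[of x]
      sum_le_suminf[of "\<lambda>n. x ^ n /\<^sub>R fact n" "{m}"]
    by (simp add: exp_def divide_inverse ac_simps)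
  then show ?thesis by simp
qed

lemma geo_poly_bound:
  fixes s :: real
  assumes "0 < s" "s < 1"
  shows "\<exists>C. \<forall>N. (\<Sum>k<N. real k ^ n * s ^ k) \<le> C"
proof -
  define a where "a = (1 + s) / 2"
  define c where "c = ln (a / s)"
  have a: "0 < a" "a < 1" "s < a" using assms by (auto simp: a_def)
  have c: "0 < c" using a assms by (simp add: c_def)
  have ec: "exp c * s = a" using a assms by (simp add: c_def)
  have kb: "real k ^ n * s ^ k \<le> fact n / c ^ n * a ^ k" for k
  proof -
    have "(c * k) ^ n / fact n \<le> exp (c * k)" using c by (intro pow_fact_le_exp) simp
    then have "c ^ n * real k ^ n \<le> fact n * exp (c * k)"
      by (simp add: divide_simps power_mult_distrib mult.commute)
    then have "real k ^ n \<le> fact n / c ^ n * exp (c * k)"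
      using c by (simp add: divide_simps mult.commute)
    then have "real k ^ n * s ^ k \<le> fact n / c ^ n * exp (c * k) * s ^ k"
      using assms by (intro mult_right_mono) auto
    also have "\<dots> = fact n / c ^ n * (exp (c * k) * s ^ k)" by simp
    also have "exp (c * k) * s ^ k = a ^ k"
      using ec by (metis exp_of_nat2_mult power_mult_distrib)
    finally show ?thesis .
  qed
  have "(\<Sum>k<N. real k ^ n * s ^ k) \<le> fact n / c ^ n * (1 / (1 - a))" for N
  proof -
    have "(\<Sum>k<N. real k ^ n * s ^ k) \<le> (\<Sum>k<N. fact n / c ^ n * a ^ k)"
      by (intro sum_mono kb)
    also have "\<dots> = fact n / c ^ n * (\<Sum>k<N. a ^ k)" by (simp add: sum_distrib_left)
    also have "(\<Sum>k<N. a ^ k) \<le> 1 / (1 - a)"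
    proof -
      have "(\<Sum>k<N. a ^ k) \<le> (\<Sum>k. a ^ k)"
        using a by (intro sum_le_suminf) auto
      also have "\<dots> = 1 / (1 - a)" using a by (simp add: suminf_geometric)
      finally show ?thesis .
    qed
    then have "fact n / c ^ n * (\<Sum>k<N. a ^ k) \<le> fact n / c ^ n * (1 / (1 - a))"
      using c by (intro mult_left_mono) auto
    finally show ?thesis .
  qed
  then show ?thesis by blast
qed

lemma dotu_add: "dotu (a + b) u = dotu a u + dotu b u"
  by (simp add: dotu_def distrib_right sum.distrib)
lemma dotu_diff: "dotu (a - b) u = dotu a u - dotu b u"
  by (simp add: dotu_def left_diff_distrib sum_subtractf)
lemma l1norm_nonneg: "0 \<le> l1norm z"
  by (simp add: l1norm_def sum_nonneg)
lemma l1norm_add: "l1norm (a + b) \<le> l1norm a + l1norm b"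
  unfolding l1norm_def sum.distrib[symmetric] by (intro sum_mono) simp
lemma l1norm_zero[simp]: "l1norm 0 = 0"
  by (simp add: l1norm_def)

definition Bu :: "real^('d::finite) \<Rightarrow> real" where
  "Bu u = 1 + (\<Sum>i\<in>UNIV. \<bar>u$i\<bar>)"

lemma Bu_pos: "0 < Bu u"
  unfolding Bu_def by (smt (verit) sum_nonneg abs_ge_zero)

lemma dotu_le: "dotu z u \<le> Bu u * l1norm z"
proof -
  have "dotu z u \<le> (\<Sum>i\<in>UNIV. real_of_int \<bar>z$i\<bar> * Bu u)"
    unfolding dotu_def
  proof (intro sum_mono)
    fix i
    have "\<bar>u$i\<bar> \<le> (\<Sum>j\<in>UNIV. \<bar>u$j\<bar>)"
      by (rule member_le_sum) auto
    then have ub: "\<bar>u$i\<bar> \<le> Bu u" by (simp add: Bu_def)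
    have "real_of_int (z$i) * u$i \<le> \<bar>real_of_int (z$i) * u$i\<bar>" by simp
    also have "\<dots> = real_of_int \<bar>z$i\<bar> * \<bar>u$i\<bar>" by (simp add: abs_mult)
    also have "\<dots> \<le> real_of_int \<bar>z$i\<bar> * Bu u" using ub by (intro mult_left_mono) auto
    finally show "real_of_int (z$i) * u$i \<le> real_of_int \<bar>z$i\<bar> * Bu u" .
  qed
  also have "\<dots> = Bu u * l1norm z" by (simp add: l1norm_def sum_distrib_left mult.commute)
  finally show ?thesis .
qed

definition qexp :: "real \<Rightarrow> real" where "qexp p = min p 2"
definition Kc :: "real^('d::finite) \<Rightarrow> real \<Rightarrow> real \<Rightarrow> real" where
  "Kc u M p = Bu u powr (qexp p) * (1 + M powr p)"
definition lam0c :: "real^('d::finite) \<Rightarrow> real \<Rightarrow> real \<Rightarrow> real \<Rightarrow> real" where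
  "lam0c u \<delta> M p = min (1/\<delta>) ((\<delta> / (2 * Kc u M p)) powr (1 / (qexp p - 1)))"

lemma Kc_pos: "0 < Kc u M p"
  unfolding Kc_def using Bu_pos[of u] by (simp add: add_pos_nonneg)

lemma lam0c_pos: "\<delta> > 0 \<Longrightarrow> p > 1 \<Longrightarrow> 0 < lam0c u \<delta> M p"
  unfolding lam0c_def using Kc_pos[of u M p] by (simp add: qexp_def)

lemma lam0c_le: "lam0c u \<delta> M p \<le> 1/\<delta>"
  unfolding lam0c_def by simp

lemma lam_small:
  assumes "\<delta> > 0" "p > 1" "0 \<le> lam" "lam \<le> lam0c u \<delta> M p"
  shows "lam powr (qexp p) * Kc u M p \<le> lam * \<delta> / 2"
proof (cases "lam = 0")
  case True then show ?thesis by simp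
next
  case False
  then have l: "0 < lam" using assms by simp
  define q where "q = qexp p"
  have q: "1 < q" "q \<le> 2" using assms by (auto simp: q_def qexp_def)
  define K where "K = Kc u M p"
  have K: "0 < K" using Kc_pos by (simp add: K_def)
  have "lam \<le> (\<delta> / (2 * K)) powr (1 / (q - 1))"
    using assms by (simp add: lam0c_def K_def q_def)
  then have "lam powr (q - 1) \<le> ((\<delta> / (2 * K)) powr (1 / (q - 1))) powr (q - 1)"
    using l q by (intro powr_mono2) auto
  also have "\<dots> = \<delta> / (2 * K)" using q K assms by (simp add: powr_powr)
  finally have a: "lam powr (q - 1) \<le> \<delta> / (2 * K)" .
  have "lam powr q = lam * lam powr (q - 1)" using l powr_add[of lam 1 "q - 1"] by simp
  then have "lam powr q * K = lam * (lam powr (q - 1) * K)" by simp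
  also have "\<dots> \<le> lam * (\<delta> / (2 * K) * K)"
    using a l K by (intro mult_left_mono mult_right_mono) auto
  also have "\<dots> = lam * \<delta> / 2" using K by simp
  finally show ?thesis by (simp add: q_def K_def)
qed

locale walk =
  fixes \<omega> :: "('d::finite) env" and u :: "real^'d" and \<delta> M p :: real
  assumes dpos: "\<delta> > 0" and Mpos: "M > 0" and p1: "p > 1"
  and nonneg: "\<And>x y. 0 \<le> \<omega> x y"
  and tot: "\<And>x. (\<integral>\<^sup>+ y. ennreal (\<omega> x y) \<partial>count_space UNIV) = 1"
  and supp: "\<And>x y. dotu (y - x) u < 0 \<Longrightarrow> \<omega> x y = 0"
  and drift: "\<And>x. ennreal \<delta> \<le> (\<integral>\<^sup>+ y. ennreal (dotu (y - x) u * \<omega> x y) \<partial>count_space UNIV)"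
  and mom: "\<And>x. (\<integral>\<^sup>+ y. ennreal (l1norm (y - x) powr p * \<omega> x y) \<partial>count_space UNIV) \<le> ennreal (M powr p)"
begin

lemma pmf_kernel: "pmf (kernel \<omega> x) y = \<omega> x y"
  unfolding kernel_def using nonneg tot by (subst pmf_embed_pmf) auto

lemma int_kernel: "(\<integral>\<^sup>+ y. f y \<partial>measure_pmf (kernel \<omega> x)) = (\<integral>\<^sup>+ y. ennreal (\<omega> x y) * f y \<partial>count_space UNIV)"
  by (simp add: nn_integral_measure_pmf pmf_kernel)

lemma AE_kernel_up: "AE y in measure_pmf (kernel \<omega> x). 0 \<le> dotu (y - x) u"
proof (rule AE_pmfI)
  fix y assume "y \<in> set_pmf (kernel \<omega> x)"
  then have "\<omega> x y \<noteq> 0" by (simp add: set_pmf_iff pmf_kernel)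
  then show "0 \<le> dotu (y - x) u" using supp[of y x] by linarith
qed

lemma kernel_drift: "ennreal \<delta> \<le> (\<integral>\<^sup>+ y. ennreal (dotu (y - x) u) \<partial>measure_pmf (kernel \<omega> x))"
proof -
  have "(\<integral>\<^sup>+ y. ennreal (dotu (y - x) u) \<partial>measure_pmf (kernel \<omega> x))
      = (\<integral>\<^sup>+ y. ennreal (dotu (y - x) u * \<omega> x y) \<partial>count_space UNIV)"
    unfolding int_kernel
  proof (rule nn_integral_cong)
    fix y
    show "ennreal (\<omega> x y) * ennreal (dotu (y - x) u) = ennreal (dotu (y - x) u * \<omega> x y)"
    proof (cases "dotu (y - x) u < 0")
      case True then show ?thesis using supp by simp
    next
      case False then show ?thesis using nonneg by (simp add: ennreal_mult mult.commute)
    qed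
  qed
  then show ?thesis using drift[of x] by simp
qed

lemma kernel_mom: "(\<integral>\<^sup>+ y. ennreal (l1norm (y - x) powr p) \<partial>measure_pmf (kernel \<omega> x)) \<le> ennreal (M powr p)"
proof -
  have "(\<integral>\<^sup>+ y. ennreal (l1norm (y - x) powr p) \<partial>measure_pmf (kernel \<omega> x))
      = (\<integral>\<^sup>+ y. ennreal (l1norm (y - x) powr p * \<omega> x y) \<partial>count_space UNIV)"
    unfolding int_kernel
    by (rule nn_integral_cong) (simp add: ennreal_mult nonneg mult.commute)
  then show ?thesis using mom[of x] by simp
qed

lemma kernel_const: "(\<integral>\<^sup>+ y. ennreal c \<partial>measure_pmf (kernel \<omega> x)) = ennreal c"
  by (simp add: measure_pmf.emeasure_space_1)

lemma kernel_lyap: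
  assumes "1 \<le> pb" "pb \<le> p"
  shows "(\<integral>\<^sup>+ y. ennreal (l1norm (y - x) powr pb) \<partial>measure_pmf (kernel \<omega> x)) \<le> ennreal (M powr pb)"
proof -
  define r where "r = pb / p"
  define c where "c = M powr p"
  have r: "0 < r" "r \<le> 1" using assms p1 by (auto simp: r_def)
  have c: "0 < c" using Mpos by (simp add: c_def)
  define A where "A = r * c powr (r - 1)"
  define B where "B = (1 - r) * c powr r"
  have A: "0 \<le> A" using r c by (simp add: A_def)
  have B: "0 \<le> B" using r c by (simp add: B_def)
  have pt: "l1norm (y - x) powr pb \<le> A * l1norm (y - x) powr p + B" for y
  proof -
    have "l1norm (y - x) powr pb = (l1norm (y - x) powr p) powr r"
      using p1 by (simp add: powr_powr r_def)
    also have "\<dots> \<le> A * l1norm (y - x) powr p + B"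
      unfolding A_def B_def by (rule lyap_pt) (use r c l1norm_nonneg in auto)
    finally show ?thesis .
  qed
  have "(\<integral>\<^sup>+ y. ennreal (l1norm (y - x) powr pb) \<partial>measure_pmf (kernel \<omega> x))
     \<le> (\<integral>\<^sup>+ y. ennreal A * ennreal (l1norm (y - x) powr p) + ennreal B \<partial>measure_pmf (kernel \<omega> x))"
  proof (rule nn_integral_mono)
    fix y
    have "ennreal (l1norm (y - x) powr pb) \<le> ennreal (A * l1norm (y - x) powr p + B)"
      using pt by (rule ennreal_leI)
    also have "\<dots> = ennreal A * ennreal (l1norm (y - x) powr p) + ennreal B"
      using A B by (simp add: ennreal_plus ennreal_mult)
    finally show "ennreal (l1norm (y - x) powr pb) \<le> ennreal A * ennreal (l1norm (y - x) powr p) + ennreal B" .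
  qed
  also have "\<dots> = ennreal A * (\<integral>\<^sup>+ y. ennreal (l1norm (y - x) powr p) \<partial>measure_pmf (kernel \<omega> x)) + ennreal B"
    by (simp add: nn_integral_add nn_integral_cmult kernel_const)
  also have "\<dots> \<le> ennreal A * ennreal (M powr p) + ennreal B"
    by (intro add_mono mult_left_mono kernel_mom) auto
  also have "\<dots> = ennreal (A * c + B)" using A B c by (simp add: ennreal_plus ennreal_mult c_def)
  also have "A * c + B = M powr pb"
  proof -
    have "c powr (r - 1) * c = c powr r" using c powr_add[of c "r - 1" 1] by simp
    moreover have "c powr r = M powr pb" using Mpos p1 by (simp add: c_def r_def powr_powr)
    ultimately show ?thesis by (simp add: A_def B_def algebra_simps)
  qed
  finally show ?thesis .
qed

end

context walk begin

abbreviation "lam0 \<equiv> lam0c u \<delta> M p"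

lemma l_q_bound:
  fixes l :: real assumes "0 \<le> l"
  shows "l powr (qexp p) \<le> 1 + l powr p"
proof (cases "l \<le> 1")
  case True
  have "l powr (qexp p) \<le> 1 powr (qexp p)"
    using True assms p1 by (intro powr_mono2) (auto simp: qexp_def)
  then have "l powr (qexp p) \<le> 1" by simp
  then show ?thesis using powr_ge_zero[of l p] by linarith
next
  case False
  then have "l powr (qexp p) \<le> l powr p" using p1 by (intro powr_mono) (auto simp: qexp_def)
  then show ?thesis by simp
qed

lemma exp_pt:
  fixes lam s l :: real
  assumes "0 \<le> lam" "0 \<le> s" "s \<le> Bu u * l" "0 \<le> l"
  shows "exp (- (lam * s)) + lam * s \<le> 1 + lam powr (qexp p) * Bu u powr (qexp p) * (1 + l powr p)"
proof -
  define q where "q = qexp p"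
  have q: "1 < q" "q \<le> 2" using p1 by (auto simp: q_def qexp_def)
  have "exp (- (lam * s)) \<le> 1 - lam * s + (lam * s) powr q"
    using assms q by (intro exp_q_bound) auto
  also have "(lam * s) powr q = lam powr q * s powr q" using assms by (simp add: powr_mult)
  also have "s powr q \<le> (Bu u * l) powr q" using assms q by (intro powr_mono2) auto
  then have "lam powr q * s powr q \<le> lam powr q * (Bu u * l) powr q" by (intro mult_left_mono) auto
  also have "(Bu u * l) powr q = Bu u powr q * l powr q" using assms Bu_pos[of u] by (simp add: powr_mult)
  also have "l powr q \<le> 1 + l powr p" using l_q_bound assms by (simp add: q_def)
  then have "lam powr q * (Bu u powr q * l powr q) \<le> lam powr q * (Bu u powr q * (1 + l powr p))"
    by (intro mult_left_mono) auto
  finally show ?thesis by (simp add: q_def mult.assoc)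
qed

lemma kernel_exp1:
  assumes "0 \<le> lam" "lam \<le> lam0"
  shows "(\<integral>\<^sup>+ y. ennreal (exp (- (lam * dotu (y - x) u))) \<partial>measure_pmf (kernel \<omega> x)) \<le> ennreal (1 - lam * \<delta> / 2)"
proof -
  define c where "c = lam powr (qexp p) * Bu u powr (qexp p)"
  have c: "0 \<le> c" by (simp add: c_def)
  define E where "E = (\<integral>\<^sup>+ y. ennreal (exp (- (lam * dotu (y - x) u))) \<partial>measure_pmf (kernel \<omega> x))"
  define S where "S = (\<integral>\<^sup>+ y. ennreal (dotu (y - x) u) \<partial>measure_pmf (kernel \<omega> x))"
  define L where "L = (\<integral>\<^sup>+ y. ennreal (l1norm (y - x) powr p) \<partial>measure_pmf (kernel \<omega> x))"
  have "E + ennreal lam * S = (\<integral>\<^sup>+ y. ennreal (exp (- (lam * dotu (y - x) u))) + ennreal lam * ennreal (dotu (y - x) u) \<partial>measure_pmf (kernel \<omega> x))"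
    by (simp add: E_def S_def nn_integral_add nn_integral_cmult)
  also have "\<dots> \<le> (\<integral>\<^sup>+ y. ennreal 1 + ennreal c * (ennreal 1 + ennreal (l1norm (y - x) powr p)) \<partial>measure_pmf (kernel \<omega> x))"
  proof (rule nn_integral_mono_AE)
    show "AE y in measure_pmf (kernel \<omega> x). ennreal (exp (- (lam * dotu (y - x) u))) + ennreal lam * ennreal (dotu (y - x) u)
        \<le> ennreal 1 + ennreal c * (ennreal 1 + ennreal (l1norm (y - x) powr p))"
      using AE_kernel_up
    proof eventually_elim
      case (elim y)
      have "exp (- (lam * dotu (y - x) u)) + lam * dotu (y - x) u \<le> 1 + c * (1 + l1norm (y - x) powr p)"
        unfolding c_def using assms elim dotu_le l1norm_nonneg by (intro exp_pt) auto
      then have "ennreal (exp (- (lam * dotu (y - x) u)) + lam * dotu (y - x) u) \<le> ennreal (1 + c * (1 + l1norm (y - x) powr p))"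
        by (rule ennreal_leI)
      then show ?case using elim assms c
        by (simp add: ennreal_plus ennreal_mult del: ennreal_1 ennreal_plus_if)
    qed
  qed
  also have "\<dots> = ennreal 1 + ennreal c * (ennreal 1 + L)"
    by (simp add: L_def nn_integral_add nn_integral_cmult measure_pmf.emeasure_space_1 del: ennreal_1)
  also have "\<dots> \<le> ennreal 1 + ennreal c * (ennreal 1 + ennreal (M powr p))"
    unfolding L_def by (intro add_mono mult_left_mono kernel_mom order.refl) auto
  also have "\<dots> = ennreal (1 + c * (1 + M powr p))"
    using c by (simp add: ennreal_plus ennreal_mult del: ennreal_1 ennreal_plus_if)
  also have "c * (1 + M powr p) = lam powr (qexp p) * Kc u M p"
    by (simp add: c_def Kc_def)
  also have "\<dots> \<le> lam * \<delta> / 2" using lam_small dpos p1 assms by blast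
  finally have 1: "E + ennreal lam * S \<le> ennreal (1 + lam * \<delta> / 2)" by (simp add: ennreal_leI)
  have "E + ennreal lam * ennreal \<delta> \<le> E + ennreal lam * S"
    unfolding S_def by (intro add_mono mult_left_mono kernel_drift) auto
  then have 3: "E + ennreal lam * ennreal \<delta> \<le> ennreal (1 + lam * \<delta> / 2)" using 1 by (rule order.trans)
  have eq: "ennreal (lam * \<delta>) = ennreal lam * ennreal \<delta>" using assms dpos by (simp add: ennreal_mult)
  have 2: "E + ennreal (lam * \<delta>) \<le> ennreal (1 + lam * \<delta> / 2)" unfolding eq by (rule 3)
  then have "E \<noteq> \<top>" by (metis ennreal_neq_top top_unique le_iff_add add_top)
  then obtain e where e: "E = ennreal e" "0 \<le> e" by (cases E) auto
  with 2 have "ennreal (e + lam * \<delta>) \<le> ennreal (1 + lam * \<delta> / 2)"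
    using assms dpos by (simp add: ennreal_plus del: ennreal_plus_if)
  then have "e + lam * \<delta> \<le> 1 + lam * \<delta> / 2"
    using assms dpos by (subst (asm) ennreal_le_iff) auto
  then have "e \<le> 1 - lam * \<delta> / 2" by simp
  then show ?thesis using e by (simp add: E_def ennreal_leI)
qed

lemma kernel_exp:
  assumes "0 \<le> lam" "lam \<le> lam0"
  shows "(\<integral>\<^sup>+ y. ennreal (exp (- lam * dotu y u)) \<partial>measure_pmf (kernel \<omega> x))
     \<le> ennreal (exp (- lam * dotu x u)) * ennreal (1 - lam * \<delta> / 2)"
proof -
  have "(\<integral>\<^sup>+ y. ennreal (exp (- lam * dotu y u)) \<partial>measure_pmf (kernel \<omega> x))
     = (\<integral>\<^sup>+ y. ennreal (exp (- lam * dotu x u)) * ennreal (exp (- (lam * dotu (y - x) u))) \<partial>measure_pmf (kernel \<omega> x))"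
  proof (rule nn_integral_cong)
    fix y
    have "exp (- lam * dotu y u) = exp (- lam * dotu x u) * exp (- (lam * dotu (y - x) u))"
      by (simp add: dotu_diff algebra_simps flip: exp_add)
    then show "ennreal (exp (- lam * dotu y u)) = ennreal (exp (- lam * dotu x u)) * ennreal (exp (- (lam * dotu (y - x) u)))"
      by (simp add: ennreal_mult)
  qed
  also have "\<dots> = ennreal (exp (- lam * dotu x u)) * (\<integral>\<^sup>+ y. ennreal (exp (- (lam * dotu (y - x) u))) \<partial>measure_pmf (kernel \<omega> x))"
    by (simp add: nn_integral_cmult)
  also have "\<dots> \<le> ennreal (exp (- lam * dotu x u)) * ennreal (1 - lam * \<delta> / 2)"
    by (intro mult_left_mono kernel_exp1 assms) auto
  finally show ?thesis .
qed

end

lemma powr_combine: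
  fixes m pb :: real
  assumes "0 < m" "1 \<le> pb"
  shows "(m / (m + 1)) powr (1 - pb) * m powr pb + (1 - m / (m + 1)) powr (1 - pb) = (m + 1) powr pb"
proof -
  have a: "(m / (m + 1)) powr (1 - pb) = m powr (1 - pb) / (m + 1) powr (1 - pb)"
    using assms by (simp add: powr_divide)
  have b: "1 - m / (m + 1) = 1 / (m + 1)" using assms by (simp add: field_simps)
  have c: "(1 / (m + 1)) powr (1 - pb) = 1 / (m + 1) powr (1 - pb)"
    using assms by (simp add: powr_divide)
  have d: "m powr (1 - pb) * m powr pb = m" using assms by (simp add: powr_add[symmetric])
  have e: "(m + 1) powr pb * (m + 1) powr (1 - pb) = m + 1" using assms by (simp add: powr_add[symmetric])
  have pos: "0 < (m + 1) powr (1 - pb)" using assms by simp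
  have "(m / (m + 1)) powr (1 - pb) * m powr pb + (1 - m / (m + 1)) powr (1 - pb)
      = (m powr (1 - pb) * m powr pb + 1) / (m + 1) powr (1 - pb)"
    unfolding a b c using pos by (simp add: field_simps)
  also have "\<dots> = (m + 1) / (m + 1) powr (1 - pb)" using d by simp
  also have "\<dots> = (m + 1) powr pb" using e pos by (simp add: field_simps)
  finally show ?thesis .
qed

context walk begin

lemma rho_nonneg: "0 \<le> lam \<Longrightarrow> lam \<le> lam0 \<Longrightarrow> 0 \<le> 1 - lam * \<delta> / 2"
proof -
  assume a: "0 \<le> lam" "lam \<le> lam0"
  have "lam * \<delta> \<le> lam0 * \<delta>" using a dpos by (intro mult_right_mono) auto
  also have "lam0 * \<delta> \<le> 1" using lam0c_le[of u \<delta> M p] dpos by (simp add: field_simps)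
  finally show ?thesis by simp
qed

lemma path_exp:
  assumes "0 \<le> lam" "lam \<le> lam0"
  shows "(\<integral>\<^sup>+ ys. ennreal (exp (- lam * dotu (ys ! n) u)) \<partial>measure_pmf (path_pmf \<omega> x n))
     \<le> ennreal (exp (- lam * dotu x u) * (1 - lam * \<delta> / 2) ^ n)"
proof (induction n)
  case 0 then show ?case by simp
next
  case (Suc n)
  define r where "r = 1 - lam * \<delta> / 2"
  have r: "0 \<le> r" using rho_nonneg assms by (simp add: r_def)
  have "(\<integral>\<^sup>+ ys. ennreal (exp (- lam * dotu (ys ! Suc n) u)) \<partial>measure_pmf (path_pmf \<omega> x (Suc n)))
     = (\<integral>\<^sup>+ ys. (\<integral>\<^sup>+ y. ennreal (exp (- lam * dotu y u)) \<partial>measure_pmf (kernel \<omega> (ys ! n))) \<partial>measure_pmf (path_pmf \<omega> x n))"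
    by (rule path_last_integral)
  also have "\<dots> \<le> (\<integral>\<^sup>+ ys. ennreal (exp (- lam * dotu (ys ! n) u)) * ennreal r \<partial>measure_pmf (path_pmf \<omega> x n))"
    by (intro nn_integral_mono kernel_exp[OF assms, unfolded r_def[symmetric]])
  also have "\<dots> = (\<integral>\<^sup>+ ys. ennreal (exp (- lam * dotu (ys ! n) u)) \<partial>measure_pmf (path_pmf \<omega> x n)) * ennreal r"
    by (simp add: nn_integral_multc)
  also have "\<dots> \<le> ennreal (exp (- lam * dotu x u) * r ^ n) * ennreal r"
    using Suc.IH by (intro mult_right_mono) (auto simp: r_def)
  also have "\<dots> = ennreal (exp (- lam * dotu x u) * r ^ Suc n)"
    using r by (simp add: ennreal_mult[symmetric] mult.assoc mult.commute)
  finally show ?case by (simp add: r_def)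
qed

lemma path_disp:
  assumes "1 \<le> pb" "pb \<le> p"
  shows "(\<integral>\<^sup>+ ys. ennreal (l1norm (ys ! m - x) powr pb) \<partial>measure_pmf (path_pmf \<omega> x m))
     \<le> ennreal (M powr pb * real m powr pb)"
proof (induction m)
  case 0 then show ?case by simp
next
  case (Suc m)
  have start: "(\<integral>\<^sup>+ ys. ennreal (l1norm (ys ! Suc m - x) powr pb) \<partial>measure_pmf (path_pmf \<omega> x (Suc m)))
     = (\<integral>\<^sup>+ ys. (\<integral>\<^sup>+ y. ennreal (l1norm (y - x) powr pb) \<partial>measure_pmf (kernel \<omega> (ys ! m))) \<partial>measure_pmf (path_pmf \<omega> x m))"
    by (rule path_last_integral)
  show ?case
  proof (cases "m = 0")
    case True
    have "(\<integral>\<^sup>+ ys. (\<integral>\<^sup>+ y. ennreal (l1norm (y - x) powr pb) \<partial>measure_pmf (kernel \<omega> (ys ! m))) \<partial>measure_pmf (path_pmf \<omega> x m))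
       = (\<integral>\<^sup>+ y. ennreal (l1norm (y - x) powr pb) \<partial>measure_pmf (kernel \<omega> x))"
      using True by simp
    also have "\<dots> \<le> ennreal (M powr pb)" by (rule kernel_lyap[OF assms])
    finally show ?thesis using start True by simp
  next
    case False
    define \<theta> where "\<theta> = real m / (real m + 1)"
    have th: "0 < \<theta>" "\<theta> < 1" using False by (auto simp: \<theta>_def)
    define \<alpha> where "\<alpha> = \<theta> powr (1 - pb)"
    define \<beta> where "\<beta> = (1 - \<theta>) powr (1 - pb)"
    have ab: "0 \<le> \<alpha>" "0 \<le> \<beta>" by (auto simp: \<alpha>_def \<beta>_def)
    have pt: "ennreal (l1norm (y - x) powr pb) \<le> ennreal \<alpha> * ennreal (l1norm (z - x) powr pb) + ennreal \<beta> * ennreal (l1norm (y - z) powr pb)" for y z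
    proof -
      have "l1norm (y - x) \<le> l1norm (z - x) + l1norm (y - z)"
        using l1norm_add[of "z - x" "y - z"] by simp
      then have "l1norm (y - x) powr pb \<le> (l1norm (z - x) + l1norm (y - z)) powr pb"
        using assms l1norm_nonneg by (intro powr_mono2) auto
      also have "\<dots> \<le> \<alpha> * l1norm (z - x) powr pb + \<beta> * l1norm (y - z) powr pb"
        unfolding \<alpha>_def \<beta>_def using th assms l1norm_nonneg by (intro convex_split) auto
      finally have "ennreal (l1norm (y - x) powr pb) \<le> ennreal (\<alpha> * l1norm (z - x) powr pb + \<beta> * l1norm (y - z) powr pb)"
        by (rule ennreal_leI)
      also have "\<dots> = ennreal \<alpha> * ennreal (l1norm (z - x) powr pb) + ennreal \<beta> * ennreal (l1norm (y - z) powr pb)"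
        using ab by (simp add: ennreal_mult ennreal_plus)
      finally show ?thesis .
    qed
    have "(\<integral>\<^sup>+ ys. (\<integral>\<^sup>+ y. ennreal (l1norm (y - x) powr pb) \<partial>measure_pmf (kernel \<omega> (ys ! m))) \<partial>measure_pmf (path_pmf \<omega> x m))
      \<le> (\<integral>\<^sup>+ ys. ennreal \<alpha> * ennreal (l1norm (ys ! m - x) powr pb) + ennreal \<beta> * ennreal (M powr pb) \<partial>measure_pmf (path_pmf \<omega> x m))"
    proof (rule nn_integral_mono)
      fix ys
      have "(\<integral>\<^sup>+ y. ennreal (l1norm (y - x) powr pb) \<partial>measure_pmf (kernel \<omega> (ys ! m)))
        \<le> (\<integral>\<^sup>+ y. ennreal \<alpha> * ennreal (l1norm (ys ! m - x) powr pb) + ennreal \<beta> * ennreal (l1norm (y - ys ! m) powr pb) \<partial>measure_pmf (kernel \<omega> (ys ! m)))"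
        by (intro nn_integral_mono pt)
      also have "\<dots> = ennreal \<alpha> * ennreal (l1norm (ys ! m - x) powr pb) + ennreal \<beta> * (\<integral>\<^sup>+ y. ennreal (l1norm (y - ys ! m) powr pb) \<partial>measure_pmf (kernel \<omega> (ys ! m)))"
        by (simp add: nn_integral_add nn_integral_cmult measure_pmf.emeasure_space_1)
      also have "\<dots> \<le> ennreal \<alpha> * ennreal (l1norm (ys ! m - x) powr pb) + ennreal \<beta> * ennreal (M powr pb)"
        by (intro add_mono mult_left_mono kernel_lyap assms order.refl) auto
      finally show "(\<integral>\<^sup>+ y. ennreal (l1norm (y - x) powr pb) \<partial>measure_pmf (kernel \<omega> (ys ! m)))
        \<le> ennreal \<alpha> * ennreal (l1norm (ys ! m - x) powr pb) + ennreal \<beta> * ennreal (M powr pb)" .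
    qed
    also have "\<dots> = ennreal \<alpha> * (\<integral>\<^sup>+ ys. ennreal (l1norm (ys ! m - x) powr pb) \<partial>measure_pmf (path_pmf \<omega> x m)) + ennreal \<beta> * ennreal (M powr pb)"
      by (simp add: nn_integral_add nn_integral_cmult measure_pmf.emeasure_space_1)
    also have "\<dots> \<le> ennreal \<alpha> * ennreal (M powr pb * real m powr pb) + ennreal \<beta> * ennreal (M powr pb)"
      by (intro add_mono mult_left_mono Suc.IH order.refl) auto
    also have "\<dots> = ennreal (M powr pb * (\<alpha> * real m powr pb + \<beta>))"
      using ab Mpos by (simp add: ennreal_mult[symmetric] ennreal_plus[symmetric] algebra_simps del: ennreal_plus)
    also have "\<alpha> * real m powr pb + \<beta> = real (Suc m) powr pb"
      unfolding \<alpha>_def \<beta>_def \<theta>_def using powr_combine[of "real m" pb] False assms by (simp add: add.commute)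
    finally show ?thesis using start by simp
  qed
qed

lemma path_nohit:
  assumes "0 \<le> lam" "lam \<le> lam0"
  shows "measure_pmf.prob (path_pmf \<omega> x n) {ys. \<forall>k\<le>n. \<not> hits u ys k} \<le> exp lam * (1 - lam * \<delta> / 2) ^ n"
proof -
  define A where "A = {ys. \<forall>k\<le>n. \<not> hits u ys k}"
  define c where "c = exp (lam * (1 + dotu x u))"
  have "emeasure (measure_pmf (path_pmf \<omega> x n)) A = (\<integral>\<^sup>+ ys. indicator A ys \<partial>measure_pmf (path_pmf \<omega> x n))"
    by simp
  also have "\<dots> \<le> (\<integral>\<^sup>+ ys. ennreal c * ennreal (exp (- lam * dotu (ys ! n) u)) \<partial>measure_pmf (path_pmf \<omega> x n))"
  proof (rule nn_integral_mono_AE, rule AE_pmfI)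
    fix ys assume ys: "ys \<in> set_pmf (path_pmf \<omega> x n)"
    show "indicator A ys \<le> ennreal c * ennreal (exp (- lam * dotu (ys ! n) u))"
    proof (cases "ys \<in> A")
      case True
      then have "\<not> hits u ys n" by (simp add: A_def)
      then have "dotu (ys ! n) u < dotu x u + 1" using path_support[OF ys] by (simp add: hits_def)
      then have "0 \<le> lam * (1 + dotu x u) + (- lam * dotu (ys ! n) u)" using assms
          mult_left_mono[of "dotu (ys ! n) u" "1 + dotu x u" lam] by (simp add: algebra_simps)
      then have "1 \<le> c * exp (- lam * dotu (ys ! n) u)" by (simp add: c_def flip: exp_add)
      then show ?thesis using True by (simp add: c_def ennreal_mult[symmetric] ennreal_leI)
    qed simp
  qed
  also have "\<dots> = ennreal c * (\<integral>\<^sup>+ ys. ennreal (exp (- lam * dotu (ys ! n) u)) \<partial>measure_pmf (path_pmf \<omega> x n))"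
    by (simp add: nn_integral_cmult)
  also have "\<dots> \<le> ennreal c * ennreal (exp (- lam * dotu x u) * (1 - lam * \<delta> / 2) ^ n)"
    by (intro mult_left_mono path_exp assms) auto
  also have "\<dots> = ennreal (exp lam * (1 - lam * \<delta> / 2) ^ n)"
  proof -
    have "c * (exp (- lam * dotu x u) * (1 - lam * \<delta> / 2) ^ n) = exp lam * (1 - lam * \<delta> / 2) ^ n"
      by (simp add: c_def algebra_simps flip: exp_add)
    then show ?thesis using rho_nonneg[OF assms] by (simp add: c_def ennreal_mult[symmetric])
  qed
  finally have "ennreal (measure_pmf.prob (path_pmf \<omega> x n) A) \<le> ennreal (exp lam * (1 - lam * \<delta> / 2) ^ n)"
    by (simp add: measure_pmf.emeasure_eq_measure)
  then show ?thesis unfolding A_def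
    using rho_nonneg[OF assms] by (subst (asm) ennreal_le_iff) auto
qed

end

definition Gc :: "real \<Rightarrow> nat \<Rightarrow> real" where
  "Gc s n = (SOME C. \<forall>N. (\<Sum>k<N. real k ^ n * s ^ k) \<le> C)"

lemma Gc_bound: "0 < s \<Longrightarrow> s < 1 \<Longrightarrow> (\<Sum>k<N. real k ^ n * s ^ k) \<le> Gc s n"
  unfolding Gc_def using someI_ex[OF geo_poly_bound[of s n]] by blast

lemma Gc_shift:
  assumes "0 < s" "s < 1"
  shows "(\<Sum>k<N. real (Suc k) ^ n * s ^ k) \<le> max 0 (Gc s n) / s"
proof -
  have e: "(\<Sum>k<Suc N. real k ^ n * s ^ k) = real 0 ^ n * s ^ 0 + (\<Sum>k<N. real (Suc k) ^ n * s ^ Suc k)"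
    by (rule sum.lessThan_Suc_shift)
  have "0 \<le> real 0 ^ n * s ^ 0" by simp
  then have "(\<Sum>k<N. real (Suc k) ^ n * s ^ Suc k) \<le> (\<Sum>k<Suc N. real k ^ n * s ^ k)"
    unfolding e by linarith
  also have "\<dots> \<le> Gc s n" by (rule Gc_bound[OF assms])
  also have "\<dots> \<le> max 0 (Gc s n)" by simp
  moreover have "(\<Sum>k<N. real (Suc k) ^ n * s ^ Suc k) = s * (\<Sum>k<N. real (Suc k) ^ n * s ^ k)"
    by (simp add: sum_distrib_left mult.left_commute)
  ultimately have "s * (\<Sum>k<N. real (Suc k) ^ n * s ^ k) \<le> max 0 (Gc s n)" by simp
  then show ?thesis using assms by (simp add: field_simps)
qed

lemma young_pt:
  fixes a w pb p :: real
  assumes "0 \<le> a" "0 < w" "1 \<le> pb" "pb < p"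
  shows "a powr pb \<le> w + w powr (1 - p / pb) * a powr p"
proof (cases "a powr pb \<le> w")
  case True then show ?thesis by (simp add: add_increasing2)
next
  case False
  then have ap: "w < a powr pb" by simp
  have e: "0 \<le> p / pb - 1" using assms by (simp add: field_simps)
  have "a powr p = a powr pb * (a powr pb) powr (p / pb - 1)"
  proof -
    have "a powr p = (a powr pb) powr (p / pb)" using assms by (simp add: powr_powr)
    also have "\<dots> = (a powr pb) powr (1 + (p / pb - 1))" by simp
    also have "\<dots> = (a powr pb) powr 1 * (a powr pb) powr (p / pb - 1)"
      by (rule powr_add)
    also have "\<dots> = a powr pb * (a powr pb) powr (p / pb - 1)"
      using ap assms by simp
    finally show ?thesis .
  qed
  moreover have "w powr (p / pb - 1) \<le> (a powr pb) powr (p / pb - 1)"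
    using ap assms e by (intro powr_mono2) auto
  ultimately have m: "a powr pb * w powr (p / pb - 1) \<le> a powr p"
    using mult_left_mono[of "w powr (p / pb - 1)" "(a powr pb) powr (p / pb - 1)" "a powr pb"] by simp
  have e1: "w powr (1 - p / pb) * w powr (p / pb - 1) = 1"
    using assms by (simp add: powr_add[symmetric])
  have "w powr (1 - p / pb) * (a powr pb * w powr (p / pb - 1)) = a powr pb * (w powr (1 - p / pb) * w powr (p / pb - 1))"
    by (simp only: ac_simps)
  then have "a powr pb = w powr (1 - p / pb) * (a powr pb * w powr (p / pb - 1))" using e1 by simp
  also have "\<dots> \<le> w powr (1 - p / pb) * a powr p" using m by (intro mult_left_mono) auto
  finally show ?thesis using assms by simp
qed

lemma hits_lt: "hits u ys k \<Longrightarrow> k < length ys"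
  by (simp add: hits_def)

lemma sigma_facts:
  assumes "length ys = Suc N"
  shows "sigma_trunc u ys \<le> N"
    and "\<And>i. i < sigma_trunc u ys \<Longrightarrow> \<not> hits u ys i"
    and "(\<exists>k. hits u ys k) \<Longrightarrow> hits u ys (sigma_trunc u ys) \<and> 0 < sigma_trunc u ys"
proof -
  show "sigma_trunc u ys \<le> N"
  proof (cases "\<exists>k. hits u ys k")
    case True
    then have "hits u ys (LEAST k. hits u ys k)" by (rule LeastI_ex)
    then have "(LEAST k. hits u ys k) < Suc N" using assms hits_lt by metis
    then show ?thesis using True by (simp add: sigma_trunc_def)
  next
    case False then show ?thesis using assms by (simp add: sigma_trunc_def)
  qed
  show "\<not> hits u ys i" if "i < sigma_trunc u ys" for i
  proof (cases "\<exists>k. hits u ys k")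
    case True
    then show ?thesis using that not_less_Least by (simp add: sigma_trunc_def) blast
  next
    case False then show ?thesis by simp
  qed
  show "hits u ys (sigma_trunc u ys) \<and> 0 < sigma_trunc u ys" if "\<exists>k. hits u ys k"
  proof -
    have h: "hits u ys (sigma_trunc u ys)" using that LeastI_ex[OF that] by (simp add: sigma_trunc_def)
    moreover have "sigma_trunc u ys \<noteq> 0"
    proof
      assume "sigma_trunc u ys = 0"
      with h show False by (simp add: hits_def)
    qed
    ultimately show ?thesis by simp
  qed
qed

lemma hits_take:
  assumes "i \<le> j" "Suc j \<le> length ys"
  shows "hits u (take (Suc j) ys) i \<longleftrightarrow> hits u ys i"
  using assms by (simp add: hits_def)

lemma prefix_int:
  assumes "j \<le> N"
  shows "(\<integral>\<^sup>+ ys. f (take (Suc j) ys) \<partial>measure_pmf (path_pmf \<omega> x N)) = (\<integral>\<^sup>+ zs. f zs \<partial>measure_pmf (path_pmf \<omega> x j))"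
proof -
  have "path_pmf \<omega> x j = map_pmf (take (Suc j)) (path_pmf \<omega> x N)" by (rule path_prefix[OF assms, symmetric])
  then show ?thesis by simp
qed

lemma geo_fin: "0 \<le> (a::real) \<Longrightarrow> a < 1 \<Longrightarrow> (\<Sum>k<N. a ^ k) \<le> 1 / (1 - a)"
proof -
  assume a: "0 \<le> a" "a < 1"
  have "(\<Sum>k<N. a ^ k) \<le> (\<Sum>k. a ^ k)" using a by (intro sum_le_suminf) auto
  also have "\<dots> = 1 / (1 - a)" using a by (simp add: suminf_geometric)
  finally show ?thesis .
qed

lemma powr_pow_swap: "0 < (v::real) \<Longrightarrow> (v ^ k) powr e = (v powr e) ^ k"
proof -
  assume v: "0 < v"
  have "(v ^ k) powr e = (v powr real k) powr e" using v by (simp add: powr_realpow)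
  also have "\<dots> = v powr (real k * e)" by (simp add: powr_powr)
  also have "\<dots> = (v powr e) ^ k" using v by (simp add: powr_power)
  finally show ?thesis .
qed

context walk begin

abbreviation "rho0 \<equiv> 1 - lam0 * \<delta> / 2"

lemma lam0_pos: "0 < lam0" using lam0c_pos dpos p1 by blast

lemma rho0: "0 < rho0" "rho0 < 1"
proof -
  have "lam0 * \<delta> \<le> 1" using lam0c_le[of u \<delta> M p] dpos by (simp add: field_simps)
  then show "0 < rho0" by simp
  show "rho0 < 1" using lam0_pos dpos by simp
qed

lemma nohit_N:
  assumes "k \<le> N"
  shows "(\<integral>\<^sup>+ ys. indicator {ys. \<forall>i\<le>k. \<not> hits u ys i} ys \<partial>measure_pmf (path_pmf \<omega> x N))
     \<le> ennreal (exp lam0 * rho0 ^ k)"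
proof -
  define B where "B = {ys. \<forall>i\<le>k. \<not> hits u ys i}"
  have "(\<integral>\<^sup>+ ys. indicator B ys \<partial>measure_pmf (path_pmf \<omega> x N))
      = (\<integral>\<^sup>+ ys. indicator B (take (Suc k) ys) \<partial>measure_pmf (path_pmf \<omega> x N))"
  proof (rule nn_integral_cong_AE, rule AE_pmfI)
    fix ys assume "ys \<in> set_pmf (path_pmf \<omega> x N)"
    then have l: "length ys = Suc N" by (simp add: path_support)
    have "ys \<in> B \<longleftrightarrow> take (Suc k) ys \<in> B"
      unfolding B_def using hits_take[of _ k ys u] l assms by auto
    then show "indicator B ys = (indicator B (take (Suc k) ys) :: ennreal)"
      by (simp add: indicator_def)
  qed
  also have "\<dots> = (\<integral>\<^sup>+ zs. indicator B zs \<partial>measure_pmf (path_pmf \<omega> x k))"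
    by (rule prefix_int[OF assms])
  also have "\<dots> = emeasure (measure_pmf (path_pmf \<omega> x k)) B" by simp
  also have "\<dots> = ennreal (measure_pmf.prob (path_pmf \<omega> x k) B)"
    by (simp add: measure_pmf.emeasure_eq_measure)
  also have "\<dots> \<le> ennreal (exp lam0 * rho0 ^ k)"
    unfolding B_def using lam0_pos by (intro ennreal_leI path_nohit) auto
  finally show ?thesis by (simp add: B_def)
qed

lemma E_sigma_bound:
  "E_sigma_pow \<omega> u x m \<le> ennreal (1 + exp lam0 * (max 0 (Gc rho0 m) / rho0))"
  unfolding E_sigma_pow_def
proof (rule SUP_least)
  fix N
  define B where "B = (\<lambda>k. {ys. \<forall>i\<le>k. \<not> hits u ys i})"
  have "(\<integral>\<^sup>+ ys. ennreal (real (sigma_trunc u ys) ^ m) \<partial>measure_pmf (path_pmf \<omega> x N))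
     \<le> (\<integral>\<^sup>+ ys. 1 + (\<Sum>k<N. ennreal (real (Suc k) ^ m) * indicator (B k) ys) \<partial>measure_pmf (path_pmf \<omega> x N))"
  proof (rule nn_integral_mono_AE, rule AE_pmfI)
    fix ys assume "ys \<in> set_pmf (path_pmf \<omega> x N)"
    then have l: "length ys = Suc N" by (simp add: path_support)
    note sf = sigma_facts[OF l, where u=u]
    show "ennreal (real (sigma_trunc u ys) ^ m) \<le> 1 + (\<Sum>k<N. ennreal (real (Suc k) ^ m) * indicator (B k) ys)"
    proof (cases "sigma_trunc u ys")
      case 0
      then show ?thesis by (cases m) (simp_all add: add_increasing2)
    next
      case (Suc k)
      then have kN: "k < N" using sf(1) by simp
      have "ys \<in> B k" unfolding B_def using sf(2) Suc by auto
      then have "ennreal (real (sigma_trunc u ys) ^ m) = ennreal (real (Suc k) ^ m) * indicator (B k) ys"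
        using Suc by simp
      also have "\<dots> \<le> (\<Sum>k<N. ennreal (real (Suc k) ^ m) * indicator (B k) ys)"
        by (rule member_le_sum) (use kN in auto)
      finally show ?thesis by (simp add: add_increasing)
    qed
  qed
  also have "\<dots> = 1 + (\<Sum>k<N. ennreal (real (Suc k) ^ m) * (\<integral>\<^sup>+ ys. indicator (B k) ys \<partial>measure_pmf (path_pmf \<omega> x N)))"
  proof -
    have I1: "(\<integral>\<^sup>+ ys. 1 \<partial>measure_pmf (path_pmf \<omega> x N)) = 1"
      by (simp add: measure_pmf.emeasure_space_1)
    have I2: "(\<integral>\<^sup>+ ys. (\<Sum>k<N. ennreal (real (Suc k) ^ m) * indicator (B k) ys) \<partial>measure_pmf (path_pmf \<omega> x N))
     = (\<Sum>k<N. (\<integral>\<^sup>+ ys. ennreal (real (Suc k) ^ m) * indicator (B k) ys \<partial>measure_pmf (path_pmf \<omega> x N)))"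
      by (rule nn_integral_sum) auto
    have I3: "\<And>k. (\<integral>\<^sup>+ ys. ennreal (real (Suc k) ^ m) * indicator (B k) ys \<partial>measure_pmf (path_pmf \<omega> x N))
       = ennreal (real (Suc k) ^ m) * (\<integral>\<^sup>+ ys. indicator (B k) ys \<partial>measure_pmf (path_pmf \<omega> x N))"
      by (rule nn_integral_cmult) auto
    have "(\<integral>\<^sup>+ ys. 1 + (\<Sum>k<N. ennreal (real (Suc k) ^ m) * indicator (B k) ys) \<partial>measure_pmf (path_pmf \<omega> x N))
      = (\<integral>\<^sup>+ ys. 1 \<partial>measure_pmf (path_pmf \<omega> x N)) + (\<integral>\<^sup>+ ys. (\<Sum>k<N. ennreal (real (Suc k) ^ m) * indicator (B k) ys) \<partial>measure_pmf (path_pmf \<omega> x N))"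
      by (rule nn_integral_add) auto
    then show ?thesis unfolding I1 I2 I3 .
  qed
  also have "\<dots> \<le> 1 + (\<Sum>k<N. ennreal (real (Suc k) ^ m) * ennreal (exp lam0 * rho0 ^ k))"
    unfolding B_def by (intro add_mono sum_mono mult_left_mono nohit_N order.refl) auto
  also have "\<dots> = ennreal (1 + exp lam0 * (\<Sum>k<N. real (Suc k) ^ m * rho0 ^ k))"
  proof -
    have t: "0 \<le> real (Suc k) ^ m * (exp lam0 * rho0 ^ k)" for k using rho0 by simp
    have "(\<Sum>k<N. ennreal (real (Suc k) ^ m) * ennreal (exp lam0 * rho0 ^ k))
        = (\<Sum>k<N. ennreal (real (Suc k) ^ m * (exp lam0 * rho0 ^ k)))"
      using rho0 by (intro sum.cong refl) (simp add: ennreal_mult)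
    also have "\<dots> = ennreal (\<Sum>k<N. real (Suc k) ^ m * (exp lam0 * rho0 ^ k))"
      using t by (rule sum_ennreal)
    also have "(\<Sum>k<N. real (Suc k) ^ m * (exp lam0 * rho0 ^ k)) = exp lam0 * (\<Sum>k<N. real (Suc k) ^ m * rho0 ^ k)"
      by (simp add: sum_distrib_left mult.left_commute)
    finally have e: "(\<Sum>k<N. ennreal (real (Suc k) ^ m) * ennreal (exp lam0 * rho0 ^ k)) = ennreal (exp lam0 * (\<Sum>k<N. real (Suc k) ^ m * rho0 ^ k))" .
    have "0 \<le> exp lam0 * (\<Sum>k<N. real (Suc k) ^ m * rho0 ^ k)"
      using rho0 by (intro mult_nonneg_nonneg sum_nonneg) auto
    then show ?thesis unfolding e by (simp add: ennreal_plus del: ennreal_plus_if)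
  qed
  also have "\<dots> \<le> ennreal (1 + exp lam0 * (max 0 (Gc rho0 m) / rho0))"
    using Gc_shift[OF rho0, where N=N and n=m] by (intro ennreal_leI add_left_mono mult_left_mono) auto
  finally show "(\<integral>\<^sup>+ ys. ennreal (real (sigma_trunc u ys) ^ m) \<partial>measure_pmf (path_pmf \<omega> x N))
     \<le> ennreal (1 + exp lam0 * (max 0 (Gc rho0 m) / rho0))" .
qed


lemma E_hit_bound:
  assumes pb: "1 \<le> pb" "pb < p"
  defines "s \<equiv> (1 / sqrt rho0) powr (1 - p / pb)"
  shows "E_hit_disp \<omega> u x pb \<le> ennreal (1 + exp lam0 / (1 - sqrt rho0) + M powr p * (max 0 (Gc s (nat \<lceil>p\<rceil>)) / s))"
  unfolding E_hit_disp_def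
proof (rule SUP_least)
  fix N
  define n where "n = nat \<lceil>p\<rceil>"
  define v where "v = 1 / sqrt rho0"
  define e where "e = 1 - p / pb"
  have sr: "0 < sqrt rho0" "sqrt rho0 < 1" using rho0 by auto
  have v: "1 < v" using sr by (simp add: v_def)
  have e: "e < 0" using pb by (simp add: e_def field_simps)
  have s: "0 < s" "s < 1" using v e by (auto simp: s_def v_def[symmetric] e_def[symmetric] powr_less_one)
  have vr: "v * rho0 = sqrt rho0" using sr rho0 by (simp add: v_def field_simps real_sqrt_mult[symmetric])
  have wk: "(v ^ k) powr e = s ^ k" for k using v by (simp add: powr_pow_swap s_def v_def[symmetric] e_def[symmetric])
  define B where "B = (\<lambda>k. {ys. \<forall>i\<le>k. \<not> hits u ys i})"
  define F where "F = (\<lambda>k ys. ennreal (v ^ k) * indicator (B k) ys)"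
  define G where "G = (\<lambda>k ys. ennreal (s ^ k) * ennreal (l1norm (ys ! Suc k - x) powr p))"
  have "(\<integral>\<^sup>+ ys. (if \<exists>k. hits u ys k then ennreal (l1norm (ys ! sigma_trunc u ys - x) powr pb) else 0) \<partial>measure_pmf (path_pmf \<omega> x N))
     \<le> (\<integral>\<^sup>+ ys. (\<Sum>k<N. F k ys + G k ys) \<partial>measure_pmf (path_pmf \<omega> x N))"
  proof (rule nn_integral_mono_AE, rule AE_pmfI)
    fix ys assume "ys \<in> set_pmf (path_pmf \<omega> x N)"
    then have l: "length ys = Suc N" by (simp add: path_support)
    note sf = sigma_facts[OF l, where u=u]
    show "(if \<exists>k. hits u ys k then ennreal (l1norm (ys ! sigma_trunc u ys - x) powr pb) else 0) \<le> (\<Sum>k<N. F k ys + G k ys)"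
    proof (cases "\<exists>k. hits u ys k")
      case True
      then have T0: "0 < sigma_trunc u ys" using sf(3) by blast
      then obtain k where k: "sigma_trunc u ys = Suc k" using gr0_implies_Suc by blast
      then have kN: "k < N" using sf(1) by simp
      have inB: "ys \<in> B k" unfolding B_def using sf(2) k by auto
      have "l1norm (ys ! Suc k - x) powr pb \<le> v ^ k + (v ^ k) powr e * l1norm (ys ! Suc k - x) powr p"
        unfolding e_def using v pb l1norm_nonneg by (intro young_pt) auto
      then have "ennreal (l1norm (ys ! Suc k - x) powr pb) \<le> ennreal (v ^ k + s ^ k * l1norm (ys ! Suc k - x) powr p)"
        unfolding wk by (rule ennreal_leI)
      also have "\<dots> = F k ys + G k ys"
        using inB v s by (simp add: F_def G_def ennreal_plus ennreal_mult del: ennreal_plus_if)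
      also have "\<dots> \<le> (\<Sum>k<N. F k ys + G k ys)"
        by (rule member_le_sum) (use kN in auto)
      finally show ?thesis using True k by simp
    qed simp
  qed
  also have "\<dots> = (\<Sum>k<N. (\<integral>\<^sup>+ ys. F k ys \<partial>measure_pmf (path_pmf \<omega> x N)) + (\<integral>\<^sup>+ ys. G k ys \<partial>measure_pmf (path_pmf \<omega> x N)))"
  proof -
    have "(\<integral>\<^sup>+ ys. (\<Sum>k<N. F k ys + G k ys) \<partial>measure_pmf (path_pmf \<omega> x N)) = (\<Sum>k<N. (\<integral>\<^sup>+ ys. F k ys + G k ys \<partial>measure_pmf (path_pmf \<omega> x N)))"
      by (rule nn_integral_sum) auto
    also have "\<dots> = (\<Sum>k<N. (\<integral>\<^sup>+ ys. F k ys \<partial>measure_pmf (path_pmf \<omega> x N)) + (\<integral>\<^sup>+ ys. G k ys \<partial>measure_pmf (path_pmf \<omega> x N)))"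
      by (intro sum.cong refl nn_integral_add) auto
    finally show ?thesis .
  qed
  also have "\<dots> \<le> (\<Sum>k<N. ennreal (exp lam0 * sqrt rho0 ^ k + M powr p * (real (Suc k) ^ n * s ^ k)))"
  proof (rule sum_mono)
    fix k assume "k \<in> {..<N}"
    then have kN: "k < N" by simp
    have f: "(\<integral>\<^sup>+ ys. F k ys \<partial>measure_pmf (path_pmf \<omega> x N)) \<le> ennreal (exp lam0 * sqrt rho0 ^ k)"
    proof -
      have "(\<integral>\<^sup>+ ys. F k ys \<partial>measure_pmf (path_pmf \<omega> x N)) = ennreal (v ^ k) * (\<integral>\<^sup>+ ys. indicator (B k) ys \<partial>measure_pmf (path_pmf \<omega> x N))"
        unfolding F_def by (rule nn_integral_cmult) auto
      also have "\<dots> \<le> ennreal (v ^ k) * ennreal (exp lam0 * rho0 ^ k)"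
        unfolding B_def using kN by (intro mult_left_mono nohit_N) auto
      also have "\<dots> = ennreal (v ^ k * (exp lam0 * rho0 ^ k))"
      proof -
        have "0 \<le> v ^ k" using v by simp
        then show ?thesis by (rule ennreal_mult'[symmetric])
      qed
      also have "v ^ k * (exp lam0 * rho0 ^ k) = exp lam0 * (v * rho0) ^ k"
        by (simp add: power_mult_distrib)
      finally show ?thesis unfolding vr .
    qed
    have g: "(\<integral>\<^sup>+ ys. G k ys \<partial>measure_pmf (path_pmf \<omega> x N)) \<le> ennreal (M powr p * (real (Suc k) ^ n * s ^ k))"
    proof -
      have "(\<integral>\<^sup>+ ys. G k ys \<partial>measure_pmf (path_pmf \<omega> x N)) = ennreal (s ^ k) * (\<integral>\<^sup>+ ys. ennreal (l1norm (ys ! Suc k - x) powr p) \<partial>measure_pmf (path_pmf \<omega> x N))"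
        unfolding G_def by (rule nn_integral_cmult) auto
      also have "(\<integral>\<^sup>+ ys. ennreal (l1norm (ys ! Suc k - x) powr p) \<partial>measure_pmf (path_pmf \<omega> x N))
          = (\<integral>\<^sup>+ ys. (\<lambda>zs. ennreal (l1norm (zs ! Suc k - x) powr p)) (take (Suc (Suc k)) ys) \<partial>measure_pmf (path_pmf \<omega> x N))"
        by simp
      also have "\<dots> = (\<integral>\<^sup>+ zs. ennreal (l1norm (zs ! Suc k - x) powr p) \<partial>measure_pmf (path_pmf \<omega> x (Suc k)))"
        using kN by (intro prefix_int) auto
      also have "\<dots> \<le> ennreal (M powr p * real (Suc k) powr p)"
        using p1 by (intro path_disp) auto
      also have "real (Suc k) powr p \<le> real (Suc k) ^ n"
      proof -
        have "real (Suc k) powr p \<le> real (Suc k) powr (real n)"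
          unfolding n_def by (intro powr_mono) linarith+
        then show ?thesis by (simp add: powr_realpow)
      qed
      then have "ennreal (M powr p * real (Suc k) powr p) \<le> ennreal (M powr p * real (Suc k) ^ n)"
        by (intro ennreal_leI mult_left_mono) auto
      finally have "(\<integral>\<^sup>+ ys. G k ys \<partial>measure_pmf (path_pmf \<omega> x N)) \<le> ennreal (s ^ k) * ennreal (M powr p * real (Suc k) ^ n)"
        by (simp add: mult_left_mono)
      also have "\<dots> = ennreal (M powr p * (real (Suc k) ^ n * s ^ k))"
        using s by (simp add: ennreal_mult[symmetric] mult.commute mult.left_commute)
      finally show ?thesis .
    qed
    have "(\<integral>\<^sup>+ ys. F k ys \<partial>measure_pmf (path_pmf \<omega> x N)) + (\<integral>\<^sup>+ ys. G k ys \<partial>measure_pmf (path_pmf \<omega> x N))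
       \<le> ennreal (exp lam0 * sqrt rho0 ^ k) + ennreal (M powr p * (real (Suc k) ^ n * s ^ k))"
      using f g by (rule add_mono)
    also have "\<dots> = ennreal (exp lam0 * sqrt rho0 ^ k + M powr p * (real (Suc k) ^ n * s ^ k))"
      using sr s by (simp add: ennreal_plus del: ennreal_plus_if)
    finally show "(\<integral>\<^sup>+ ys. F k ys \<partial>measure_pmf (path_pmf \<omega> x N)) + (\<integral>\<^sup>+ ys. G k ys \<partial>measure_pmf (path_pmf \<omega> x N))
       \<le> ennreal (exp lam0 * sqrt rho0 ^ k + M powr p * (real (Suc k) ^ n * s ^ k))" .
  qed
  also have "\<dots> = ennreal (\<Sum>k<N. exp lam0 * sqrt rho0 ^ k + M powr p * (real (Suc k) ^ n * s ^ k))"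
    using sr s by (intro sum_ennreal) auto
  also have "\<dots> \<le> ennreal (1 + exp lam0 / (1 - sqrt rho0) + M powr p * (max 0 (Gc s n) / s))"
  proof (rule ennreal_leI)
    have "(\<Sum>k<N. exp lam0 * sqrt rho0 ^ k + M powr p * (real (Suc k) ^ n * s ^ k))
       = exp lam0 * (\<Sum>k<N. sqrt rho0 ^ k) + M powr p * (\<Sum>k<N. real (Suc k) ^ n * s ^ k)"
      by (simp add: sum.distrib sum_distrib_left)
    also have "\<dots> \<le> exp lam0 * (1 / (1 - sqrt rho0)) + M powr p * (max 0 (Gc s n) / s)"
      using geo_fin[of "sqrt rho0" N] sr Gc_shift[OF s, where N=N and n=n]
      by (intro add_mono mult_left_mono) auto
    finally show "(\<Sum>k<N. exp lam0 * sqrt rho0 ^ k + M powr p * (real (Suc k) ^ n * s ^ k))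
       \<le> 1 + exp lam0 / (1 - sqrt rho0) + M powr p * (max 0 (Gc s n) / s)" by simp
  qed
  finally show "(\<integral>\<^sup>+ ys. (if \<exists>k. hits u ys k then ennreal (l1norm (ys ! sigma_trunc u ys - x) powr pb) else 0) \<partial>measure_pmf (path_pmf \<omega> x N))
     \<le> ennreal (1 + exp lam0 / (1 - sqrt rho0) + M powr p * (max 0 (Gc s (nat \<lceil>p\<rceil>)) / s))"
    by (simp add: n_def)
qed

end

lemma shift_measurable: "shift z \<in> measurable env_space env_space"
  unfolding env_space_def shift_def
proof (rule measurable_PiM_single')
  fix i :: "int^'a"
  show "(\<lambda>(\<omega>::'a env) y. \<omega> (i + z) (y + z)) \<in> measurable (Pi\<^sub>M UNIV (\<lambda>_. Pi\<^sub>M UNIV (\<lambda>_. borel))) (Pi\<^sub>M UNIV (\<lambda>_. borel :: real measure))"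
  proof (rule measurable_PiM_single')
    fix j :: "int^'a"
    have m1: "(\<lambda>\<omega>::'a env. \<omega> (i + z)) \<in> measurable (Pi\<^sub>M UNIV (\<lambda>_. Pi\<^sub>M UNIV (\<lambda>_. borel))) (Pi\<^sub>M UNIV (\<lambda>_. borel :: real measure))"
      by (rule measurable_component_singleton) simp
    have m2: "(\<lambda>f. f (j + z)) \<in> measurable (Pi\<^sub>M UNIV (\<lambda>_. borel :: real measure)) borel"
      by (rule measurable_component_singleton) simp
    show "(\<lambda>\<omega>::'a env. \<omega> (i + z) (j + z)) \<in> measurable (Pi\<^sub>M UNIV (\<lambda>_. Pi\<^sub>M UNIV (\<lambda>_. borel))) borel"
      using measurable_comp[OF m1 m2] by (simp add: o_def)
  qed (auto simp: space_PiM)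
qed (auto simp: space_PiM)

lemma reindex_count:
  fixes f :: "int^('d::finite) \<Rightarrow> ennreal"
  shows "(\<integral>\<^sup>+ y. f y \<partial>count_space UNIV) = (\<integral>\<^sup>+ y. f (y + x) \<partial>count_space UNIV)"
proof -
  have b: "bij_betw (\<lambda>y. y + x) UNIV UNIV"
    by (rule bij_betwI[where g="\<lambda>y. y - x"]) auto
  show ?thesis using nn_integral_bij_count_space[OF b, of f] by simp
qed

lemma zero_outside:
  fixes g :: "'a \<Rightarrow> real"
  assumes nn: "\<And>z. 0 \<le> g z" and hs: "(g has_sum 1) UNIV" and A: "infsum g A = 1" and z: "z \<notin> A"
  shows "g z = 0"
proof -
  have sU: "g summable_on UNIV" using hs by (rule has_sum_imp_summable)
  have sA: "g summable_on A" using sU by (rule summable_on_subset_banach) simp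
  have sB: "g summable_on (- A)" using sU by (rule summable_on_subset_banach) simp
  have "infsum g (A \<union> - A) = infsum g A + infsum g (- A)"
    using sA sB by (intro infsum_Un_disjoint) auto
  moreover have "infsum g (A \<union> - A) = 1" using hs by (simp add: infsumI)
  ultimately have "infsum g (- A) = 0" using A by simp
  moreover have "infsum g {z} \<le> infsum g (- A)"
    using z nn sB by (intro infsum_mono_neutral) auto
  ultimately show ?thesis using nn[of z] by simp
qed


lemma shift0: "shift x \<omega> 0 z = \<omega> x (z + x)"
  by (simp add: shift_def)

lemma walk_of_conds:
  fixes \<omega> :: "('d::finite) env"
  assumes d: "\<delta> > 0" and Mp: "M > 0" and p: "p > 1"
  and om: "\<omega> \<in> Omega"
  and c1: "\<And>x. (\<Sum>\<^sub>\<infinity>z\<in>{z. 0 \<le> dotu z u}. shift x \<omega> 0 z) = 1"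
  and c2: "\<And>x. (\<Sum>\<^sub>\<infinity>z. dotu z u * shift x \<omega> 0 z) \<ge> \<delta>"
  and c3: "\<And>x. (\<integral>\<^sup>+ z. ennreal (l1norm z powr p * shift x \<omega> 0 z) \<partial>count_space UNIV) \<le> ennreal (M powr p)"
  shows "walk \<omega> u \<delta> M p"
proof -
  have pv: "(\<lambda>z. \<omega> x (z + x)) \<in> prob_vectors" for x
  proof -
    have "(\<lambda>y. \<omega> x (x + y)) \<in> prob_vectors" using om by (simp add: Omega_def)
    then show ?thesis by (simp add: add.commute)
  qed
  have nn0: "0 \<le> \<omega> x (z + x)" for x z using pv[of x] by (simp add: prob_vectors_def)
  have hs: "((\<lambda>z. \<omega> x (z + x)) has_sum 1) UNIV" for x using pv[of x] by (simp add: prob_vectors_def)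
  have nonneg: "0 \<le> \<omega> x y" for x y using nn0[of x "y - x"] by simp
  have zero: "\<omega> x y = 0" if "dotu (y - x) u < 0" for x y
  proof -
    have "\<omega> x ((y - x) + x) = 0"
      using zero_outside[where g="\<lambda>z. \<omega> x (z + x)" and A="{z. 0 \<le> dotu z u}" and z="y - x"]
        nn0 hs c1[of x] that by (simp add: shift0)
    then show ?thesis by simp
  qed
  show ?thesis
  proof (unfold_locales)
    show "\<delta> > 0" "M > 0" "p > 1" using d Mp p by auto
    show "\<And>x y. 0 \<le> \<omega> x y" by (rule nonneg)
    show "\<And>x y. dotu (y - x) u < 0 \<Longrightarrow> \<omega> x y = 0" by (rule zero)
  next
    fix x
    have "(\<integral>\<^sup>+ y. ennreal (\<omega> x y) \<partial>count_space UNIV) = (\<integral>\<^sup>+ y. ennreal (\<omega> x (y + x)) \<partial>count_space UNIV)"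
      by (rule reindex_count)
    also have "\<dots> = ennreal (infsum (\<lambda>z. \<omega> x (z + x)) UNIV)"
      using nn0 hs[of x] by (intro nn_integral_infsum_real) (auto intro: has_sum_imp_summable)
    also have "infsum (\<lambda>z. \<omega> x (z + x)) UNIV = 1" using hs[of x] by (rule infsumI)
    finally show "(\<integral>\<^sup>+ y. ennreal (\<omega> x y) \<partial>count_space UNIV) = 1" by simp
  next
    fix x
    define h where "h = (\<lambda>z. dotu z u * \<omega> x (z + x))"
    have hnn: "0 \<le> h z" for z
    proof (cases "dotu z u < 0")
      case True
      then have "\<omega> x (z + x) = 0" using zero[of "z + x" x] by simp
      then show ?thesis by (simp add: h_def)
    next
      case False then show ?thesis using nn0 by (simp add: h_def)
    qed
    have c2': "\<delta> \<le> infsum h UNIV" using c2[of x] by (simp add: h_def shift0)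
    have sh: "h summable_on UNIV"
    proof (rule ccontr)
      assume "\<not> h summable_on UNIV"
      then have "infsum h UNIV = 0" by (simp add: infsum_not_exists)
      then show False using c2' d by simp
    qed
    have "(\<integral>\<^sup>+ y. ennreal (dotu (y - x) u * \<omega> x y) \<partial>count_space UNIV) = (\<integral>\<^sup>+ y. ennreal (dotu (y + x - x) u * \<omega> x (y + x)) \<partial>count_space UNIV)"
      by (rule reindex_count)
    also have "\<dots> = (\<integral>\<^sup>+ y. ennreal (h y) \<partial>count_space UNIV)" by (simp add: h_def)
    also have "\<dots> = ennreal (infsum h UNIV)" using hnn sh by (intro nn_integral_infsum_real) auto
    finally show "ennreal \<delta> \<le> (\<integral>\<^sup>+ y. ennreal (dotu (y - x) u * \<omega> x y) \<partial>count_space UNIV)"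
      using c2' by (simp add: ennreal_leI)
  next
    fix x
    have "(\<integral>\<^sup>+ y. ennreal (l1norm (y - x) powr p * \<omega> x y) \<partial>count_space UNIV) = (\<integral>\<^sup>+ y. ennreal (l1norm (y + x - x) powr p * \<omega> x (y + x)) \<partial>count_space UNIV)"
      by (rule reindex_count)
    also have "\<dots> = (\<integral>\<^sup>+ z. ennreal (l1norm z powr p * shift x \<omega> 0 z) \<partial>count_space UNIV)" by (simp add: shift0)
    finally show "(\<integral>\<^sup>+ y. ennreal (l1norm (y - x) powr p * \<omega> x y) \<partial>count_space UNIV) \<le> ennreal (M powr p)"
      using c3[of x] by simp
  qed
qed

theorem lemma3p4:
  fixes u :: "real^('d::finite)" and M \<delta> p :: real
  assumes "u \<noteq> 0" and "\<delta> > 0" and "M > 0" and "p > 1"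
  shows "\<exists>lam0 (Cbar :: nat \<Rightarrow> real) (Chat :: real \<Rightarrow> real).
    lam0 > 0 \<and> (\<forall>m. Cbar m > 0) \<and> (\<forall>pb. 1 \<le> pb \<and> pb < p \<longrightarrow> Chat pb > 0) \<and>
    (\<forall>P :: 'd env measure.
      prob_space P \<and> sets P = sets env_space \<and>
      (AE \<omega> in P. \<omega> \<in> Omega) \<and>
      (\<forall>z. distr P P (shift z) = P) \<and>
      (AE \<omega> in P. (\<Sum>\<^sub>\<infinity>z\<in>{z. 0 \<le> dotu z u}. \<omega> 0 z) = 1) \<and>
      (AE \<omega> in P. (\<Sum>\<^sub>\<infinity>z. dotu z u * \<omega> 0 z) \<ge> \<delta>) \<and>
      (AE \<omega> in P. (\<integral>\<^sup>+ z. ennreal (l1norm z powr p * \<omega> 0 z) \<partial>count_space UNIV)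
                      \<le> ennreal (M powr p))
      \<longrightarrow>
      (AE \<omega> in P. \<forall>x lam n m. 0 \<le> lam \<and> lam \<le> lam0 \<longrightarrow>
         (\<forall>pb. 1 \<le> pb \<and> pb \<le> p \<longrightarrow>
            (\<integral>\<^sup>+ ys. ennreal (l1norm (ys ! m - x) powr pb) \<partial>measure_pmf (path_pmf \<omega> x m))
              \<le> ennreal (M powr pb * real m powr pb)) \<and>
         (\<integral>\<^sup>+ ys. ennreal (exp (- lam * dotu (ys ! n) u)) \<partial>measure_pmf (path_pmf \<omega> x n))
              \<le> ennreal (exp (- lam * dotu x u) * (1 - lam * \<delta> / 2) ^ n) \<and>
         measure_pmf.prob (path_pmf \<omega> x n) {ys. \<forall>k\<le>n. \<not> hits u ys k}
              \<le> exp lam * (1 - lam * \<delta> / 2) ^ n \<and>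
         E_sigma_pow \<omega> u x m \<le> ennreal (Cbar m) \<and>
         (\<forall>pb. 1 \<le> pb \<and> pb < p \<longrightarrow> E_hit_disp \<omega> u x pb \<le> ennreal (Chat pb))))"
proof -
  note d = assms(2) and Mp = assms(3) and p1 = assms(4)
  define lam0 where "lam0 = lam0c u \<delta> M p"
  define rho where "rho = 1 - lam0 * \<delta> / 2"
  have l0: "0 < lam0" unfolding lam0_def using lam0c_pos d p1 by blast
  have rho: "0 < rho" "rho < 1"
  proof -
    have "lam0 * \<delta> \<le> 1" using lam0c_le[of u \<delta> M p] d by (simp add: field_simps lam0_def)
    then show "0 < rho" by (simp add: rho_def)
    show "rho < 1" using l0 d by (simp add: rho_def)
  qed
  define Cbar where "Cbar = (\<lambda>m::nat. 1 + exp lam0 * (max 0 (Gc rho m) / rho))"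
  define sf where "sf = (\<lambda>pb::real. (1 / sqrt rho) powr (1 - p / pb))"
  define Chat where "Chat = (\<lambda>pb. 1 + exp lam0 / (1 - sqrt rho) + M powr p * (max 0 (Gc (sf pb) (nat \<lceil>p\<rceil>)) / sf pb))"
  have sr: "sqrt rho < 1" using rho by simp
  show ?thesis
  proof (intro exI conjI allI impI)
    show "0 < lam0" by (rule l0)
  next
    fix m show "0 < Cbar m" unfolding Cbar_def using rho by (simp add: add_pos_nonneg)
  next
    fix pb :: real assume "1 \<le> pb \<and> pb < p"
    have "0 < sf pb" using rho by (simp add: sf_def)
    then show "0 < Chat pb" unfolding Chat_def using sr Mp
      by (intro add_pos_nonneg) (auto intro!: divide_nonneg_pos)
  next
    fix P :: "'d env measure"
    assume H: "prob_space P \<and> sets P = sets env_space \<and>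
      (AE \<omega> in P. \<omega> \<in> Omega) \<and>
      (\<forall>z. distr P P (shift z) = P) \<and>
      (AE \<omega> in P. (\<Sum>\<^sub>\<infinity>z\<in>{z. 0 \<le> dotu z u}. \<omega> 0 z) = 1) \<and>
      (AE \<omega> in P. (\<Sum>\<^sub>\<infinity>z. dotu z u * \<omega> 0 z) \<ge> \<delta>) \<and>
      (AE \<omega> in P. (\<integral>\<^sup>+ z. ennreal (l1norm z powr p * \<omega> 0 z) \<partial>count_space UNIV)
                      \<le> ennreal (M powr p))"
    then have sP: "sets P = sets env_space" and Om: "AE \<omega> in P. \<omega> \<in> Omega"
      and inv: "\<And>z. distr P P (shift z) = P"
      and h1: "AE \<omega> in P. (\<Sum>\<^sub>\<infinity>z\<in>{z. 0 \<le> dotu z u}. \<omega> 0 z) = 1"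
      and h2: "AE \<omega> in P. (\<Sum>\<^sub>\<infinity>z. dotu z u * \<omega> 0 z) \<ge> \<delta>"
      and h3: "AE \<omega> in P. (\<integral>\<^sup>+ z. ennreal (l1norm z powr p * \<omega> 0 z) \<partial>count_space UNIV) \<le> ennreal (M powr p)"
      by auto
    have meas: "shift z \<in> measurable P P" for z
      using shift_measurable[of z] measurable_cong_sets[OF sP sP] by simp
    have AEs: "AE \<omega> in P. Q (shift z \<omega>)" if "AE \<omega> in P. Q \<omega>" for Q z
    proof -
      have "AE \<omega> in distr P P (shift z). Q \<omega>" unfolding inv[of z] by (rule that)
      then show ?thesis by (rule AE_distrD[OF meas])
    qed
    have A1: "AE \<omega> in P. \<forall>x. (\<Sum>\<^sub>\<infinity>z\<in>{z. 0 \<le> dotu z u}. shift x \<omega> 0 z) = 1"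
      by (subst AE_all_countable) (auto intro: AEs[OF h1])
    have A2: "AE \<omega> in P. \<forall>x. (\<Sum>\<^sub>\<infinity>z. dotu z u * shift x \<omega> 0 z) \<ge> \<delta>"
      by (subst AE_all_countable) (auto intro: AEs[OF h2])
    have A3: "AE \<omega> in P. \<forall>x. (\<integral>\<^sup>+ z. ennreal (l1norm z powr p * shift x \<omega> 0 z) \<partial>count_space UNIV) \<le> ennreal (M powr p)"
      by (subst AE_all_countable) (auto intro: AEs[OF h3])
    have W: "AE \<omega> in P. walk \<omega> u \<delta> M p"
      using Om A1 A2 A3
    proof eventually_elim
      case (elim \<omega>)
      then show ?case using d Mp p1 by (intro walk_of_conds) auto
    qed
    show "AE \<omega> in P. \<forall>x lam n m. 0 \<le> lam \<and> lam \<le> lam0 \<longrightarrow>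
         (\<forall>pb. 1 \<le> pb \<and> pb \<le> p \<longrightarrow>
            (\<integral>\<^sup>+ ys. ennreal (l1norm (ys ! m - x) powr pb) \<partial>measure_pmf (path_pmf \<omega> x m))
              \<le> ennreal (M powr pb * real m powr pb)) \<and>
         (\<integral>\<^sup>+ ys. ennreal (exp (- lam * dotu (ys ! n) u)) \<partial>measure_pmf (path_pmf \<omega> x n))
              \<le> ennreal (exp (- lam * dotu x u) * (1 - lam * \<delta> / 2) ^ n) \<and>
         measure_pmf.prob (path_pmf \<omega> x n) {ys. \<forall>k\<le>n. \<not> hits u ys k}
              \<le> exp lam * (1 - lam * \<delta> / 2) ^ n \<and>
         E_sigma_pow \<omega> u x m \<le> ennreal (Cbar m) \<and>
         (\<forall>pb. 1 \<le> pb \<and> pb < p \<longrightarrow> E_hit_disp \<omega> u x pb \<le> ennreal (Chat pb))"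
      using W
    proof eventually_elim
      case (elim \<omega>)
      interpret walk \<omega> u \<delta> M p by (rule elim)
      show ?case
      proof (intro allI impI conjI)
        fix x :: "int^'d" and lam :: real and n m :: nat
        assume lam: "0 \<le> lam \<and> lam \<le> lam0"
        then have lam': "0 \<le> lam" "lam \<le> lam0c u \<delta> M p" by (auto simp: lam0_def)
        show "(\<integral>\<^sup>+ ys. ennreal (l1norm (ys ! m - x) powr pb) \<partial>measure_pmf (path_pmf \<omega> x m))
              \<le> ennreal (M powr pb * real m powr pb)" if "1 \<le> pb \<and> pb \<le> p" for pb
          using that by (intro path_disp) auto
        show "(\<integral>\<^sup>+ ys. ennreal (exp (- lam * dotu (ys ! n) u)) \<partial>measure_pmf (path_pmf \<omega> x n))
              \<le> ennreal (exp (- lam * dotu x u) * (1 - lam * \<delta> / 2) ^ n)"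
          using lam' by (rule path_exp)
        show "measure_pmf.prob (path_pmf \<omega> x n) {ys. \<forall>k\<le>n. \<not> hits u ys k}
              \<le> exp lam * (1 - lam * \<delta> / 2) ^ n"
          using lam' by (rule path_nohit)
        show "E_sigma_pow \<omega> u x m \<le> ennreal (Cbar m)"
          unfolding Cbar_def rho_def lam0_def by (rule E_sigma_bound)
        show "E_hit_disp \<omega> u x pb \<le> ennreal (Chat pb)" if "1 \<le> pb \<and> pb < p" for pb
          unfolding Chat_def sf_def rho_def lam0_def using that by (intro E_hit_bound) auto
      qed
    qed
  qed
qed

end
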